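(* Let $\mathcal G$ be a finite connected groupoid and $\alpha=(S_g,\alpha_g)_{g\in\mathcal G}$ a unital group-type partial action of $\mathcal G$ on a ring $S=\bigoplus_{y\in\mathcal G_0}S_y$, with $S_g=S1_g$ and $1_g\neq0$ for all $g$. Let $\mathcal H\in\mathrm{wSub}_\alpha(\mathcal G)$, with connected components $\mathcal H_1,\dots,\mathcal H_r$ having object sets $Y_1,\dots,Y_r$, choose $y_j\in Y_j$, and let $T=S^{\alpha_{\mathcal H}}$ and $T_{y_j}=S_{y_j}^{\alpha_{\mathcal H_j(y_j)}}$. Then: (i) $\mathcal G_T$ is a wide subgroupoid of $\mathcal G$ if and only if $\mathcal G(y_j)_{T_{y_j}}$ is a subgroup of $\mathcal G(y_j)$ for all $1\le j\le r$; (ii) $\mathcal G_T=\mathcal H$ if and only if $\mathcal G(y_j)_{T_{y_j}}=\mathcal H_j(y_j)$ for all $1\le j\le r$.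
   Context: A groupoid is a small category with all morphisms invertible; $\mathcal G_0$ is its object set (identified with identity morphisms), $s(g),t(g)$ source and target, $\mathcal G(x,y)=\{g:s(g)=x,t(g)=y\}$, $\mathcal G(x)=\mathcal G(x,x)$; $gh$ defined iff $s(g)=t(h)$; connected means all $\mathcal G(x,y)\ne\emptyset$; connected components are full subgroupoids on classes of $x\sim y\iff\mathcal G(x,y)\neq\emptyset$; a subgroupoid is wide if it contains all of $\mathcal G_0$. A partial action $\alpha=(S_g,\alpha_g)_{g\in\mathcal G}$ on a ring $S$: for each $g$, $S_{t(g)}$ is an ideal of $S$, $S_g$ an ideal of $S_{t(g)}$, $\alpha_g:S_{g^{-1}}\to S_g$ a ring isomorphism; $\alpha_x=\mathrm{id}_{S_x}$; for composable $(g,h)$, $\alpha_h^{-1}(S_{g^{-1}}\cap S_h)\subseteq S_{(gh)^{-1}}$ and $\alpha_g\alpha_h(a)=\alpha_{gh}(a)$ there. Unital: $S_g=S1_g$, $1_g$ central idempotent. A transversal for $x$ in a connected groupoid $\mathcal K$ is $\{\tau_y\}_{y\in\mathcal K_0}$ with $\tau_y\in\mathcal K(x,y)$, $\tau_x=x$; a partial action of connected $\mathcal K$ on $A=\bigoplus_{y\in\mathcal K_0}A_y$ is group-type if some $x$ and transversal satisfy $A_{\tau_y^{-1}}=A_x$, $A_{\tau_y}=A_y$ for all $y$; for non-connected $\mathcal K$ it is group-type if each restriction to a connected component $\mathcal K_Y$ (acting on $\bigoplus_{y\in Y}A_y$) is group-type. For a subgroupoid $\mathcal H$, $\alpha_{\mathcal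 H}=(S_h,\alpha_h)_{h\in\mathcal H}$ acts on $\bigoplus_{z\in\mathcal H_0}S_z$. $\mathrm{wSub}_\alpha(\mathcal G)$ is the set of wide subgroupoids $\mathcal H$ with $\alpha_{\mathcal H}$ group-type. For a subgroupoid $\mathcal K$ and subring $A\subseteq S$, $A^{\alpha_{\mathcal K}}=\{a\in A:\alpha_k(a1_{k^{-1}})=a1_k\ \forall k\in\mathcal K\}$. For a subring $T\subseteq S$, $\mathcal G_T=\{g\in\mathcal G:\alpha_g(t1_{g^{-1}})=t1_g\ \forall t\in T\}$; for $y\in\mathcal G_0$ and a subring $B\subseteq S_y$, $\mathcal G(y)_B=\{l\in\mathcal G(y):\alpha_l(b1_{l^{-1}})=b1_l\ \forall b\in B\}$. *)

theory Defs
  imports Main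
begin

section \<open>Groupoids (objects identified with identity morphisms)\<close>

record 'g groupoid =
  mor  :: "'g set"
  src  :: "'g \<Rightarrow> 'g"
  tgt  :: "'g \<Rightarrow> 'g"
  comp :: "'g \<Rightarrow> 'g \<Rightarrow> 'g"   \<comment> \<open>comp g h = gh, meaningful when src g = tgt h\<close>
  ginv :: "'g \<Rightarrow> 'g"

definition objs :: "('g, 'b) groupoid_scheme \<Rightarrow> 'g set" where
  "objs G = src G ` mor G"

definition is_groupoid :: "('g, 'b) groupoid_scheme \<Rightarrow> bool" where
  "is_groupoid G \<longleftrightarrow>
     (\<forall>g\<in>mor G. src G g \<in> mor G \<and> tgt G g \<in> mor G \<and> ginv G g \<in> mor G) \<and>
     (\<forall>x\<in>objs G. src G x = x \<and> tgt G x = x) \<and>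
     (\<forall>g\<in>mor G. src G (tgt G g) = tgt G g) \<and>
     (\<forall>g\<in>mor G. \<forall>h\<in>mor G. src G g = tgt G h \<longrightarrow>
        comp G g h \<in> mor G \<and> src G (comp G g h) = src G h \<and> tgt G (comp G g h) = tgt G g) \<and>
     (\<forall>f\<in>mor G. \<forall>g\<in>mor G. \<forall>h\<in>mor G. src G f = tgt G g \<and> src G g = tgt G h \<longrightarrow>
        comp G (comp G f g) h = comp G f (comp G g h)) \<and>
     (\<forall>g\<in>mor G. comp G (tgt G g) g = g \<and> comp G g (src G g) = g) \<and>
     (\<forall>g\<in>mor G. src G (ginv G g) = tgt G g \<and> tgt G (ginv G g) = src G g \<and>
        comp G g (ginv G g) = tgt G g \<and> comp G (ginv G g) g = src G g)"

definition hom :: "('g, 'b) groupoid_scheme \<Rightarrow> 'g \<Rightarrow> 'g \<Rightarrow> 'g set" where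
  "hom G x y = {g \<in> mor G. src G g = x \<and> tgt G g = y}"

definition connected_groupoid :: "('g, 'b) groupoid_scheme \<Rightarrow> bool" where
  "connected_groupoid G \<longleftrightarrow> (\<forall>x\<in>objs G. \<forall>y\<in>objs G. hom G x y \<noteq> {})"

text \<open>Subgroupoids are represented as subsets of the morphism set, with the inherited operations.\<close>

definition subgroupoid :: "('g, 'b) groupoid_scheme \<Rightarrow> 'g set \<Rightarrow> bool" where
  "subgroupoid G H \<longleftrightarrow> H \<subseteq> mor G \<and>
     (\<forall>h\<in>H. src G h \<in> H \<and> tgt G h \<in> H \<and> ginv G h \<in> H) \<and>
     (\<forall>h\<in>H. \<forall>k\<in>H. src G h = tgt G k \<longrightarrow> comp G h k \<in> H)"

definition wide :: "('g, 'b) groupoid_scheme \<Rightarrow> 'g set \<Rightarrow> bool" where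
  "wide G H \<longleftrightarrow> objs G \<subseteq> H"

definition loc_group :: "('g, 'b) groupoid_scheme \<Rightarrow> 'g set \<Rightarrow> 'g \<Rightarrow> 'g set" where
  "loc_group G H y = {h \<in> H. src G h = y \<and> tgt G h = y}"

text \<open>Object sets of the connected components of a subgroupoid H.\<close>
definition components :: "('g, 'b) groupoid_scheme \<Rightarrow> 'g set \<Rightarrow> 'g set set" where
  "components G H = {{y \<in> src G ` H. \<exists>h\<in>H. src G h = x \<and> tgt G h = y} | x. x \<in> src G ` H}"

definition subgroup_at :: "('g, 'b) groupoid_scheme \<Rightarrow> 'g \<Rightarrow> 'g set \<Rightarrow> bool" where
  "subgroup_at G y K \<longleftrightarrow> K \<subseteq> loc_group G (mor G) y \<and> y \<in> K \<and>
     (\<forall>h\<in>K. \<forall>k\<in>K. comp G h k \<in> K) \<and> (\<forall>h\<in>K. ginv G h \<in> K)"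

definition is_ideal :: "'a::ring set \<Rightarrow> 'a set \<Rightarrow> bool" where
  "is_ideal I A \<longleftrightarrow> I \<subseteq> A \<and> 0 \<in> I \<and> (\<forall>a\<in>I. \<forall>b\<in>I. a + b \<in> I) \<and> (\<forall>a\<in>I. - a \<in> I) \<and>
     (\<forall>r\<in>A. \<forall>a\<in>I. r * a \<in> I \<and> a * r \<in> I)"

definition ring_iso :: "('a::ring \<Rightarrow> 'a) \<Rightarrow> 'a set \<Rightarrow> 'a set \<Rightarrow> bool" where
  "ring_iso f A B \<longleftrightarrow> bij_betw f A B \<and>
     (\<forall>a\<in>A. \<forall>b\<in>A. f (a + b) = f a + f b \<and> f (a * b) = f a * f b)"

text \<open>The ring S is the whole type 'a; S = direct sum of the S_y, y an object.\<close>
definition internal_direct_sum :: "'g set \<Rightarrow> ('g \<Rightarrow> 'a::ring set) \<Rightarrow> bool" where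
  "internal_direct_sum Y Sg \<longleftrightarrow>
     (\<forall>a::'a. \<exists>!f. (\<forall>y. y \<notin> Y \<longrightarrow> f y = 0) \<and> (\<forall>y\<in>Y. f y \<in> Sg y) \<and> a = (\<Sum>y\<in>Y. f y))"

definition partial_action ::
  "('g, 'b) groupoid_scheme \<Rightarrow> ('g \<Rightarrow> 'a::ring set) \<Rightarrow> ('g \<Rightarrow> 'a \<Rightarrow> 'a) \<Rightarrow> bool" where
  "partial_action G Sg al \<longleftrightarrow>
     (\<forall>g\<in>mor G. is_ideal (Sg (tgt G g)) UNIV \<and> is_ideal (Sg g) (Sg (tgt G g)) \<and>
        ring_iso (al g) (Sg (ginv G g)) (Sg g)) \<and>
     (\<forall>x\<in>objs G. \<forall>a\<in>Sg x. al x a = a) \<and>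
     (\<forall>g\<in>mor G. \<forall>h\<in>mor G. src G g = tgt G h \<longrightarrow>
        (\<forall>a\<in>Sg (ginv G h). al h a \<in> Sg (ginv G g) \<inter> Sg h \<longrightarrow>
           a \<in> Sg (ginv G (comp G g h)) \<and> al g (al h a) = al (comp G g h) a))"

definition unital_pa ::
  "('g, 'b) groupoid_scheme \<Rightarrow> ('g \<Rightarrow> 'a::ring set) \<Rightarrow> ('g \<Rightarrow> 'a) \<Rightarrow> bool" where
  "unital_pa G Sg one \<longleftrightarrow>
     (\<forall>g\<in>mor G. Sg g = {a * one g | a. True} \<and> one g * one g = one g \<and>
        (\<forall>a. a * one g = one g * a))"

definition group_type_on ::
  "('g, 'b) groupoid_scheme \<Rightarrow> 'g set \<Rightarrow> ('g \<Rightarrow> 'a set) \<Rightarrow> 'g set \<Rightarrow> bool" where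
  "group_type_on G H Sg Y \<longleftrightarrow> (\<exists>x\<in>Y. \<exists>\<tau>. \<tau> x = x \<and>
     (\<forall>y\<in>Y. \<tau> y \<in> H \<and> src G (\<tau> y) = x \<and> tgt G (\<tau> y) = y \<and>
        Sg (ginv G (\<tau> y)) = Sg x \<and> Sg (\<tau> y) = Sg y))"

definition group_type :: "('g, 'b) groupoid_scheme \<Rightarrow> 'g set \<Rightarrow> ('g \<Rightarrow> 'a set) \<Rightarrow> bool" where
  "group_type G H Sg \<longleftrightarrow> (\<forall>Y\<in>components G H. group_type_on G H Sg Y)"

definition wSub :: "('g, 'b) groupoid_scheme \<Rightarrow> ('g \<Rightarrow> 'a set) \<Rightarrow> 'g set set" where
  "wSub G Sg = {H. subgroupoid G H \<and> wide G H \<and> group_type G H Sg}"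

definition fixed_ring ::
  "('g, 'b) groupoid_scheme \<Rightarrow> ('g \<Rightarrow> 'a::ring \<Rightarrow> 'a) \<Rightarrow> ('g \<Rightarrow> 'a) \<Rightarrow> 'g set \<Rightarrow> 'a set \<Rightarrow> 'a set" where
  "fixed_ring G al one K A = {a \<in> A. \<forall>k\<in>K. al k (a * one (ginv G k)) = a * one k}"

text \<open>G_T = stab (mor G) T, and G(y)_B = stab (G(y)) B.\<close>
definition stab ::
  "('g, 'b) groupoid_scheme \<Rightarrow> ('g \<Rightarrow> 'a::ring \<Rightarrow> 'a) \<Rightarrow> ('g \<Rightarrow> 'a) \<Rightarrow> 'g set \<Rightarrow> 'a set \<Rightarrow> 'g set" where
  "stab G al one K B = {k \<in> K. \<forall>b\<in>B. al k (b * one (ginv G k)) = b * one k}"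

end

theory Submission
  imports Defs
begin

locale grpd =
  fixes G :: "('g, 'b) groupoid_scheme"
  assumes grp: "is_groupoid G"
begin

lemma mor_src[simp]: "g \<in> mor G \<Longrightarrow> src G g \<in> mor G"
  using grp unfolding is_groupoid_def by blast
lemma mor_tgt[simp]: "g \<in> mor G \<Longrightarrow> tgt G g \<in> mor G"
  using grp unfolding is_groupoid_def by blast
lemma mor_inv[simp]: "g \<in> mor G \<Longrightarrow> ginv G g \<in> mor G"
  using grp unfolding is_groupoid_def by blast
lemma src_objs[simp]: "g \<in> mor G \<Longrightarrow> src G g \<in> objs G"
  unfolding objs_def by blast
lemma obj_src[simp]: "x \<in> objs G \<Longrightarrow> src G x = x"
  using grp unfolding is_groupoid_def by blast
lemma obj_tgt[simp]: "x \<in> objs G \<Longrightarrow> tgt G x = x"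
  using grp unfolding is_groupoid_def by blast
lemma obj_mor: "x \<in> objs G \<Longrightarrow> x \<in> mor G"
  unfolding objs_def by auto
lemma tgt_objs[simp]: "g \<in> mor G \<Longrightarrow> tgt G g \<in> objs G"
proof -
  assume g: "g \<in> mor G"
  have "src G (tgt G g) = tgt G g" using grp g unfolding is_groupoid_def by blast
  then show ?thesis unfolding objs_def using g by (metis image_eqI mor_tgt)
qed
lemma src_src[simp]: "g \<in> mor G \<Longrightarrow> src G (src G g) = src G g" by simp
lemma tgt_src[simp]: "g \<in> mor G \<Longrightarrow> tgt G (src G g) = src G g" by simp
lemma src_tgt[simp]: "g \<in> mor G \<Longrightarrow> src G (tgt G g) = tgt G g" by simp
lemma tgt_tgt[simp]: "g \<in> mor G \<Longrightarrow> tgt G (tgt G g) = tgt G g" by simp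

lemma comp_mor[simp]: "g \<in> mor G \<Longrightarrow> h \<in> mor G \<Longrightarrow> src G g = tgt G h \<Longrightarrow> comp G g h \<in> mor G"
  using grp unfolding is_groupoid_def by blast
lemma src_comp[simp]: "g \<in> mor G \<Longrightarrow> h \<in> mor G \<Longrightarrow> src G g = tgt G h \<Longrightarrow> src G (comp G g h) = src G h"
  using grp unfolding is_groupoid_def by blast
lemma tgt_comp[simp]: "g \<in> mor G \<Longrightarrow> h \<in> mor G \<Longrightarrow> src G g = tgt G h \<Longrightarrow> tgt G (comp G g h) = tgt G g"
  using grp unfolding is_groupoid_def by blast
lemma assoc[simp]: "f \<in> mor G \<Longrightarrow> g \<in> mor G \<Longrightarrow> h \<in> mor G \<Longrightarrow> src G f = tgt G g \<Longrightarrow> src G g = tgt G h \<Longrightarrow>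
   comp G (comp G f g) h = comp G f (comp G g h)"
  using grp unfolding is_groupoid_def by blast
lemma comp_tgt_l[simp]: "g \<in> mor G \<Longrightarrow> comp G (tgt G g) g = g"
  using grp unfolding is_groupoid_def by blast
lemma comp_src_r[simp]: "g \<in> mor G \<Longrightarrow> comp G g (src G g) = g"
  using grp unfolding is_groupoid_def by blast
lemma src_inv[simp]: "g \<in> mor G \<Longrightarrow> src G (ginv G g) = tgt G g"
  using grp unfolding is_groupoid_def by blast
lemma tgt_inv[simp]: "g \<in> mor G \<Longrightarrow> tgt G (ginv G g) = src G g"
  using grp unfolding is_groupoid_def by blast
lemma comp_inv_r[simp]: "g \<in> mor G \<Longrightarrow> comp G g (ginv G g) = tgt G g"
  using grp unfolding is_groupoid_def by blast
lemma comp_inv_l[simp]: "g \<in> mor G \<Longrightarrow> comp G (ginv G g) g = src G g"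
  using grp unfolding is_groupoid_def by blast

lemma comp_obj_l: "x \<in> objs G \<Longrightarrow> g \<in> mor G \<Longrightarrow> tgt G g = x \<Longrightarrow> comp G x g = g"
  by auto
lemma comp_obj_r: "x \<in> objs G \<Longrightarrow> g \<in> mor G \<Longrightarrow> src G g = x \<Longrightarrow> comp G g x = g"
  by auto

lemma cancel1[simp]: "s \<in> mor G \<Longrightarrow> x \<in> mor G \<Longrightarrow> tgt G x = tgt G s \<Longrightarrow> comp G s (comp G (ginv G s) x) = x"
proof -
  assume a: "s \<in> mor G" "x \<in> mor G" "tgt G x = tgt G s"
  have "comp G s (comp G (ginv G s) x) = comp G (comp G s (ginv G s)) x"
    using a by (intro assoc[symmetric]) auto
  also have "\<dots> = x" using a comp_tgt_l[of x] by simp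
  finally show ?thesis .
qed
lemma cancel2[simp]: "s \<in> mor G \<Longrightarrow> x \<in> mor G \<Longrightarrow> tgt G x = src G s \<Longrightarrow> comp G (ginv G s) (comp G s x) = x"
proof -
  assume a: "s \<in> mor G" "x \<in> mor G" "tgt G x = src G s"
  have "comp G (ginv G s) (comp G s x) = comp G (comp G (ginv G s) s) x"
    using a by (intro assoc[symmetric]) auto
  also have "\<dots> = x" using a comp_tgt_l[of x] by simp
  finally show ?thesis .
qed

lemma inv_inv[simp]: "g \<in> mor G \<Longrightarrow> ginv G (ginv G g) = g"
proof -
  assume g: "g \<in> mor G"
  have "ginv G (ginv G g) = comp G (ginv G (ginv G g)) (comp G (ginv G g) g)"
    using g comp_src_r[of "ginv G (ginv G g)"] by simp
  also have "\<dots> = comp G (comp G (ginv G (ginv G g)) (ginv G g)) g"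
    using g by (intro assoc[symmetric]) auto
  also have "\<dots> = g" using g by (simp del: assoc)
  finally show ?thesis .
qed

lemma inv_obj[simp]: "x \<in> objs G \<Longrightarrow> ginv G x = x"
proof -
  assume x: "x \<in> objs G"
  then have m: "x \<in> mor G" by (rule obj_mor)
  have "ginv G x = comp G (ginv G x) x" using x m by (metis comp_src_r mor_inv obj_tgt src_inv)
  also have "\<dots> = x" using m x by simp
  finally show ?thesis .
qed

lemma inv_comp: "g \<in> mor G \<Longrightarrow> h \<in> mor G \<Longrightarrow> src G g = tgt G h \<Longrightarrow>
   ginv G (comp G g h) = comp G (ginv G h) (ginv G g)"
proof -
  assume a: "g \<in> mor G" "h \<in> mor G" "src G g = tgt G h"
  let ?k = "comp G g h" and ?c = "comp G (ginv G h) (ginv G g)"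
  have k: "?k \<in> mor G" using a by simp
  have "ginv G ?k = comp G (src G ?k) (ginv G ?k)" using k
    by (metis comp_tgt_l mor_inv tgt_inv)
  also have "src G ?k = comp G ?c ?k" using a by (simp add: assoc[of "ginv G h" "ginv G g" "comp G g h"])
  also have "comp G (comp G ?c ?k) (ginv G ?k) = comp G ?c (comp G ?k (ginv G ?k))"
    using a k by (simp del: cancel1 cancel2 comp_inv_r)
  also have "\<dots> = ?c" using a k comp_src_r[of ?c] by simp
  finally show ?thesis .
qed

end

locale pas = grpd G for G :: "('g, 'b) groupoid_scheme" +
  fixes Sg :: "'g \<Rightarrow> 'a::ring set" and al :: "'g \<Rightarrow> 'a \<Rightarrow> 'a" and one :: "'g \<Rightarrow> 'a"
  assumes fin: "finite (mor G)"
    and pa: "partial_action G Sg al" and un: "unital_pa G Sg one"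
    and ids: "internal_direct_sum (objs G) Sg"
    and nz: "\<forall>g\<in>mor G. one g \<noteq> 0"
begin

lemma Sg_eq: "g \<in> mor G \<Longrightarrow> Sg g = {a * one g | a. True}"
  using un unfolding unital_pa_def by blast
lemma one_idem: "g \<in> mor G \<Longrightarrow> one g * one g = one g"
  using un unfolding unital_pa_def by blast
lemma one_central: "g \<in> mor G \<Longrightarrow> a * one g = one g * a"
  using un unfolding unital_pa_def by blast
lemma mul_one_in[simp]: "g \<in> mor G \<Longrightarrow> a * one g \<in> Sg g"
  using Sg_eq by blast
lemma one_in[simp]: "g \<in> mor G \<Longrightarrow> one g \<in> Sg g"
  using mul_one_in[of g "one g"] one_idem by simp
lemma EU1: "g \<in> mor G \<Longrightarrow> x \<in> Sg g \<Longrightarrow> x * one g = x"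
proof -
  assume g: "g \<in> mor G" and x: "x \<in> Sg g"
  then obtain a where "x = a * one g" using Sg_eq by blast
  then show ?thesis using one_idem[OF g] by (simp add: mult.assoc)
qed
lemma EU2: "g \<in> mor G \<Longrightarrow> x \<in> Sg g \<Longrightarrow> one g * x = x"
  using EU1 one_central by metis
lemma one_eq: "k1 \<in> mor G \<Longrightarrow> k2 \<in> mor G \<Longrightarrow> Sg k1 = Sg k2 \<Longrightarrow> one k1 = one k2"
proof -
  assume a: "k1 \<in> mor G" "k2 \<in> mor G" "Sg k1 = Sg k2"
  have 1: "one k1 * one k2 = one k1" using EU1[of k2 "one k1"] a one_in[of k1] by simp
  have 2: "one k2 * one k1 = one k2" using EU1[of k1 "one k2"] a one_in[of k2] by simp
  show ?thesis using 1 2 one_central[OF a(2), of "one k1"] by simp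
qed
lemma unit_unique: "g \<in> mor G \<Longrightarrow> u \<in> Sg g \<Longrightarrow> (\<forall>v\<in>Sg g. v * u = v) \<Longrightarrow> u = one g"
proof -
  assume a: "g \<in> mor G" "u \<in> Sg g" "\<forall>v\<in>Sg g. v * u = v"
  have "one g * u = one g" using a one_in by blast
  moreover have "one g * u = u" using EU2 a by blast
  ultimately show ?thesis by simp
qed

lemma ideal_tgt: "g \<in> mor G \<Longrightarrow> is_ideal (Sg (tgt G g)) UNIV"
  using pa unfolding partial_action_def by blast
lemma ideal_g: "g \<in> mor G \<Longrightarrow> is_ideal (Sg g) (Sg (tgt G g))"
  using pa unfolding partial_action_def by blast
lemma iso: "g \<in> mor G \<Longrightarrow> ring_iso (al g) (Sg (ginv G g)) (Sg g)"
  using pa unfolding partial_action_def by blast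
lemma obj_id: "x \<in> objs G \<Longrightarrow> a \<in> Sg x \<Longrightarrow> al x a = a"
  using pa unfolding partial_action_def by blast
lemma PA3: "g \<in> mor G \<Longrightarrow> h \<in> mor G \<Longrightarrow> src G g = tgt G h \<Longrightarrow> a \<in> Sg (ginv G h) \<Longrightarrow>
   al h a \<in> Sg (ginv G g) \<Longrightarrow> al h a \<in> Sg h \<Longrightarrow>
   a \<in> Sg (ginv G (comp G g h)) \<and> al g (al h a) = al (comp G g h) a"
  using pa unfolding partial_action_def by blast

lemma ideal_obj: "x \<in> objs G \<Longrightarrow> is_ideal (Sg x) UNIV"
  using ideal_tgt[of x] obj_mor by simp
lemma obj_mult: "x \<in> objs G \<Longrightarrow> a \<in> Sg x \<Longrightarrow> r * a \<in> Sg x \<and> a * r \<in> Sg x"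
  using ideal_obj unfolding is_ideal_def by blast
lemma obj_zero: "x \<in> objs G \<Longrightarrow> 0 \<in> Sg x"
  using ideal_obj unfolding is_ideal_def by blast
lemma sub_tgt: "g \<in> mor G \<Longrightarrow> Sg g \<subseteq> Sg (tgt G g)"
  using ideal_g unfolding is_ideal_def by blast
lemma sub_src: "g \<in> mor G \<Longrightarrow> Sg (ginv G g) \<subseteq> Sg (src G g)"
  using sub_tgt[of "ginv G g"] by simp
lemma obj_one_in: "g \<in> mor G \<Longrightarrow> x \<in> objs G \<Longrightarrow> t * one x \<in> Sg x"
  using obj_mor mul_one_in by blast

lemma al_in: "g \<in> mor G \<Longrightarrow> a \<in> Sg (ginv G g) \<Longrightarrow> al g a \<in> Sg g"
  using iso unfolding ring_iso_def bij_betw_def by blast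
lemma al_surj: "g \<in> mor G \<Longrightarrow> b \<in> Sg g \<Longrightarrow> \<exists>a\<in>Sg (ginv G g). al g a = b"
proof -
  assume a: "g \<in> mor G" "b \<in> Sg g"
  then have "b \<in> al g ` Sg (ginv G g)" using iso[OF a(1)] unfolding ring_iso_def bij_betw_def by blast
  then show ?thesis by (metis imageE)
qed
lemma al_mult: "g \<in> mor G \<Longrightarrow> a \<in> Sg (ginv G g) \<Longrightarrow> b \<in> Sg (ginv G g) \<Longrightarrow> al g (a * b) = al g a * al g b"
  using iso unfolding ring_iso_def by blast
lemma al_zero: "g \<in> mor G \<Longrightarrow> al g 0 = 0"
proof -
  assume g: "g \<in> mor G"
  have z: "0 \<in> Sg (ginv G g)" using ideal_g[of "ginv G g"] g unfolding is_ideal_def by simp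
  have "al g (0 + 0) = al g 0 + al g 0" using iso[OF g] z unfolding ring_iso_def by blast
  then show ?thesis by simp
qed

lemma inv_cancel: "k \<in> mor G \<Longrightarrow> x \<in> Sg (ginv G k) \<Longrightarrow> al (ginv G k) (al k x) = x"
proof -
  assume k: "k \<in> mor G" and x: "x \<in> Sg (ginv G k)"
  have y: "al k x \<in> Sg k" using al_in k x by blast
  have "al (ginv G k) (al k x) = al (comp G (ginv G k) k) x"
    using PA3[of "ginv G k" k x] k x y by simp
  also have "\<dots> = x" using k x obj_id[of "src G k" x] sub_src[OF k] by auto
  finally show ?thesis .
qed

lemma al_unit: "h \<in> mor G \<Longrightarrow> al h (one (ginv G h)) = one h"
proof -
  assume h: "h \<in> mor G"
  have u: "al h (one (ginv G h)) \<in> Sg h" using al_in h by simp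
  have "\<forall>v\<in>Sg h. v * al h (one (ginv G h)) = v"
  proof
    fix v assume v: "v \<in> Sg h"
    then obtain w where w: "w \<in> Sg (ginv G h)" "al h w = v" using al_surj h by blast
    have "v * al h (one (ginv G h)) = al h (w * one (ginv G h))" using al_mult h w by simp
    also have "\<dots> = v" using EU1[of "ginv G h" w] w h by simp
    finally show "v * al h (one (ginv G h)) = v" .
  qed
  then show ?thesis using unit_unique h u by blast
qed

lemma objs_fin: "finite (objs G)"
  unfolding objs_def using fin by simp

lemma ex1_eq: "\<exists>!x. P x \<Longrightarrow> P a \<Longrightarrow> P b \<Longrightarrow> a = b" by blast

lemma F1: "y \<in> objs G \<Longrightarrow> z \<in> objs G \<Longrightarrow> y \<noteq> z \<Longrightarrow> a \<in> Sg y \<Longrightarrow> b \<in> Sg z \<Longrightarrow> a * b = 0"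
proof -
  assume a: "y \<in> objs G" "z \<in> objs G" "y \<noteq> z" "a \<in> Sg y" "b \<in> Sg z"
  let ?c = "a * b"
  have cy: "?c \<in> Sg y" using obj_mult a by blast
  have cz: "?c \<in> Sg z" using obj_mult a by blast
  let ?f1 = "\<lambda>w. if w = y then ?c else 0" and ?f2 = "\<lambda>w. if w = z then ?c else 0"
  have P1: "(\<forall>w. w \<notin> objs G \<longrightarrow> ?f1 w = 0) \<and> (\<forall>w\<in>objs G. ?f1 w \<in> Sg w) \<and> ?c = (\<Sum>w\<in>objs G. ?f1 w)"
    using a cy obj_zero objs_fin by (auto simp: sum.delta)
  have P2: "(\<forall>w. w \<notin> objs G \<longrightarrow> ?f2 w = 0) \<and> (\<forall>w\<in>objs G. ?f2 w \<in> Sg w) \<and> ?c = (\<Sum>w\<in>objs G. ?f2 w)"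
    using a cz obj_zero objs_fin by (auto simp: sum.delta)
  have "\<exists>!f. (\<forall>w. w \<notin> objs G \<longrightarrow> f w = 0) \<and> (\<forall>w\<in>objs G. f w \<in> Sg w) \<and> ?c = (\<Sum>w\<in>objs G. f w)"
    using ids unfolding internal_direct_sum_def by blast
  then have "?f1 = ?f2" using P1 P2 ex1_eq[where P="\<lambda>f. (\<forall>w. w \<notin> objs G \<longrightarrow> f w = 0) \<and> (\<forall>w\<in>objs G. f w \<in> Sg w) \<and> ?c = (\<Sum>w\<in>objs G. f w)"]
    by simp
  then have "?f1 y = ?f2 y" by (rule fun_cong)
  then show ?thesis using a by simp
qed

lemma SUMC: "Y \<subseteq> objs G \<Longrightarrow> w \<in> objs G \<Longrightarrow> (\<forall>y\<in>Y. f y \<in> Sg y) \<Longrightarrow>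
   (\<Sum>y\<in>Y. f y) * one w = (if w \<in> Y then f w else 0)"
proof -
  assume a: "Y \<subseteq> objs G" "w \<in> objs G" "\<forall>y\<in>Y. f y \<in> Sg y"
  have fY: "finite Y" using a objs_fin finite_subset by blast
  have "(\<Sum>y\<in>Y. f y) * one w = (\<Sum>y\<in>Y. f y * one w)" by (simp add: sum_distrib_right)
  also have "\<dots> = (\<Sum>y\<in>Y. if y = w then f w else 0)"
  proof (rule sum.cong)
    fix y assume y: "y \<in> Y"
    show "f y * one w = (if y = w then f w else 0)"
    proof (cases "y = w")
      case True then show ?thesis using EU1[of w "f w"] a y obj_mor by auto
    next
      case False then show ?thesis using F1[of y w "f y" "one w"] a y obj_mor by auto
    qed
  qed simp
  also have "\<dots> = (if w \<in> Y then f w else 0)" using fY by (simp add: sum.delta')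
  finally show ?thesis .
qed

end

context pas
begin

definition fullm :: "'g \<Rightarrow> bool" where
  "fullm g \<longleftrightarrow> Sg (ginv G g) = Sg (src G g) \<and> Sg g = Sg (tgt G g)"

definition PP :: "'g \<Rightarrow> 'a \<Rightarrow> 'a \<Rightarrow> bool" where
  "PP g a b \<longleftrightarrow> al g (a * one (ginv G g)) = b * one g"

lemma full_inv: "g \<in> mor G \<Longrightarrow> fullm g \<Longrightarrow> fullm (ginv G g)"
  unfolding fullm_def by simp

lemma full_al_in: "s \<in> mor G \<Longrightarrow> fullm s \<Longrightarrow> a \<in> Sg (src G s) \<Longrightarrow> al s a \<in> Sg (tgt G s)"
  using al_in unfolding fullm_def by metis
lemma full_cancel1: "s \<in> mor G \<Longrightarrow> fullm s \<Longrightarrow> a \<in> Sg (src G s) \<Longrightarrow> al (ginv G s) (al s a) = a"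
  using inv_cancel unfolding fullm_def by metis
lemma full_cancel2: "s \<in> mor G \<Longrightarrow> fullm s \<Longrightarrow> c \<in> Sg (tgt G s) \<Longrightarrow> al s (al (ginv G s) c) = c"
  using inv_cancel[of "ginv G s" c] unfolding fullm_def by simp

lemma RDa1: "s \<in> mor G \<Longrightarrow> fullm s \<Longrightarrow> g \<in> mor G \<Longrightarrow> src G g = tgt G s \<Longrightarrow>
   a \<in> Sg (src G s) \<Longrightarrow> al s a \<in> Sg (ginv G g) \<Longrightarrow>
   a \<in> Sg (ginv G (comp G g s)) \<and> al (comp G g s) a = al g (al s a)"
  using PA3[of g s a] full_al_in[of s a] unfolding fullm_def by auto

lemma RDa2: "s \<in> mor G \<Longrightarrow> fullm s \<Longrightarrow> g \<in> mor G \<Longrightarrow> src G g = tgt G s \<Longrightarrow>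
   a \<in> Sg (ginv G (comp G g s)) \<Longrightarrow> a \<in> Sg (src G s) \<and> al s a \<in> Sg (ginv G g)"
proof -
  assume a: "s \<in> mor G" "fullm s" "g \<in> mor G" "src G g = tgt G s" "a \<in> Sg (ginv G (comp G g s))"
  let ?k = "comp G g s"
  have k: "?k \<in> mor G" using a by simp
  have ay: "a \<in> Sg (src G s)" using sub_src[OF k] a by auto
  have c: "al s a \<in> Sg (tgt G s)" using full_al_in a ay by blast
  have d1: "al s a \<in> Sg (ginv G (ginv G s))" using c a unfolding fullm_def by simp
  have e: "al (ginv G s) (al s a) = a" using full_cancel1 a ay by blast
  have d2: "al (ginv G s) (al s a) \<in> Sg (ginv G ?k)" using e a by simp
  have d3: "al (ginv G s) (al s a) \<in> Sg (ginv G s)" using e ay a(2) unfolding fullm_def by simp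
  have "al s a \<in> Sg (ginv G (comp G ?k (ginv G s)))"
    using PA3[of ?k "ginv G s" "al s a"] a k d1 d2 d3 by simp
  moreover have "comp G ?k (ginv G s) = g" using a comp_src_r[of g] by simp
  ultimately show ?thesis using ay by simp
qed

lemma RDc: "s \<in> mor G \<Longrightarrow> fullm s \<Longrightarrow> g \<in> mor G \<Longrightarrow> src G g = tgt G s \<Longrightarrow>
   Sg (comp G g s) = Sg g"
proof -
  assume a: "s \<in> mor G" "fullm s" "g \<in> mor G" "src G g = tgt G s"
  let ?k = "comp G g s"
  have k: "?k \<in> mor G" using a by simp
  show ?thesis
  proof
    show "Sg ?k \<subseteq> Sg g"
    proof
      fix b assume "b \<in> Sg ?k"
      then obtain x where x: "x \<in> Sg (ginv G ?k)" "al ?k x = b" using al_surj k by blast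
      have "x \<in> Sg (src G s) \<and> al s x \<in> Sg (ginv G g)" using RDa2 a x by blast
      then show "b \<in> Sg g" using RDa1[of s g x] a x al_in by auto
    qed
  next
    show "Sg g \<subseteq> Sg ?k"
    proof
      fix b assume "b \<in> Sg g"
      then obtain c where c: "c \<in> Sg (ginv G g)" "al g c = b" using al_surj a by blast
      have cz: "c \<in> Sg (tgt G s)" using sub_src[OF a(3)] a(4) c by auto
      let ?x = "al (ginv G s) c"
      have x1: "?x \<in> Sg (src G s)" using full_al_in[of "ginv G s" c] full_inv a cz by simp
      have x2: "al s ?x = c" using full_cancel2 a cz by blast
      have "?x \<in> Sg (ginv G ?k) \<and> al ?k ?x = b" using RDa1[of s g ?x] a x1 x2 c by simp
      then show "b \<in> Sg ?k" using al_in k by blast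
    qed
  qed
qed

lemma RDd: "s \<in> mor G \<Longrightarrow> fullm s \<Longrightarrow> g \<in> mor G \<Longrightarrow> src G g = tgt G s \<Longrightarrow>
   al s (one (ginv G (comp G g s))) = one (ginv G g)"
proof -
  assume a: "s \<in> mor G" "fullm s" "g \<in> mor G" "src G g = tgt G s"
  let ?k = "comp G g s"
  let ?u = "one (ginv G ?k)"
  have k: "?k \<in> mor G" using a by simp
  have u: "?u \<in> Sg (ginv G ?k)" using k by simp
  have uu: "?u \<in> Sg (src G s) \<and> al s ?u \<in> Sg (ginv G g)" using RDa2 a u by blast
  have "\<forall>v\<in>Sg (ginv G g). v * al s ?u = v"
  proof
    fix v assume v: "v \<in> Sg (ginv G g)"
    have vz: "v \<in> Sg (tgt G s)" using sub_src[OF a(3)] a(4) v by auto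
    let ?w = "al (ginv G s) v"
    have w1: "?w \<in> Sg (src G s)" using full_al_in[of "ginv G s" v] full_inv a vz by simp
    have w2: "al s ?w = v" using full_cancel2 a vz by blast
    have w3: "?w \<in> Sg (ginv G ?k)" using RDa1[of s g ?w] a w1 w2 v by simp
    have "v * al s ?u = al s (?w * ?u)" using al_mult[of s ?w ?u] a w1 uu w2 unfolding fullm_def by simp
    also have "?w * ?u = ?w" using EU1[of "ginv G ?k" ?w] k w3 by simp
    finally show "v * al s ?u = v" using w2 by simp
  qed
  then show ?thesis using unit_unique[of "ginv G g" "al s ?u"] a uu by simp
qed

lemma Pr: "s \<in> mor G \<Longrightarrow> fullm s \<Longrightarrow> g \<in> mor G \<Longrightarrow> src G g = tgt G s \<Longrightarrow>
   a \<in> Sg (src G s) \<Longrightarrow> PP (comp G g s) a b \<longleftrightarrow> PP g (al s a) b"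
proof -
  assume a: "s \<in> mor G" "fullm s" "g \<in> mor G" "src G g = tgt G s" "a \<in> Sg (src G s)"
  let ?k = "comp G g s"
  have k: "?k \<in> mor G" using a by simp
  have au: "a * one (ginv G ?k) \<in> Sg (ginv G ?k)" using k by simp
  have uu: "one (ginv G ?k) \<in> Sg (src G s)" using RDa2 a k by simp
  have "al ?k (a * one (ginv G ?k)) = al g (al s (a * one (ginv G ?k)))"
    using RDa1[of s g "a * one (ginv G ?k)"] RDa2[of s g "a * one (ginv G ?k)"] a au by blast
  also have "al s (a * one (ginv G ?k)) = al s a * one (ginv G g)"
    using al_mult[of s a "one (ginv G ?k)"] a uu RDd[of s g] unfolding fullm_def by simp
  finally have 1: "al ?k (a * one (ginv G ?k)) = al g (al s a * one (ginv G g))" .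
  have 2: "one ?k = one g" using RDc a one_eq k by blast
  show ?thesis unfolding PP_def using 1 2 by simp
qed

lemma Pinv1: "k \<in> mor G \<Longrightarrow> PP k a b \<Longrightarrow> PP (ginv G k) b a"
proof -
  assume k: "k \<in> mor G" and p: "PP k a b"
  have "al (ginv G k) (b * one k) = al (ginv G k) (al k (a * one (ginv G k)))"
    using p unfolding PP_def by simp
  also have "\<dots> = a * one (ginv G k)" using inv_cancel k by simp
  finally show ?thesis unfolding PP_def using k by simp
qed

lemma Pinv: "k \<in> mor G \<Longrightarrow> PP k a b \<longleftrightarrow> PP (ginv G k) b a"
  using Pinv1[of k a b] Pinv1[of "ginv G k" b a] by auto

lemma Pl: "s \<in> mor G \<Longrightarrow> fullm s \<Longrightarrow> g \<in> mor G \<Longrightarrow> tgt G g = src G s \<Longrightarrow>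
   b \<in> Sg (tgt G s) \<Longrightarrow> PP (comp G s g) a b \<longleftrightarrow> PP g a (al (ginv G s) b)"
proof -
  assume a: "s \<in> mor G" "fullm s" "g \<in> mor G" "tgt G g = src G s" "b \<in> Sg (tgt G s)"
  have "PP (comp G s g) a b \<longleftrightarrow> PP (ginv G (comp G s g)) b a" using Pinv[of "comp G s g" a b] a by simp
  also have "ginv G (comp G s g) = comp G (ginv G g) (ginv G s)" using inv_comp a by simp
  also have "PP (comp G (ginv G g) (ginv G s)) b a \<longleftrightarrow> PP (ginv G g) (al (ginv G s) b) a"
    using Pr[of "ginv G s" "ginv G g" b a] a full_inv by simp
  also have "\<dots> \<longleftrightarrow> PP g a (al (ginv G s) b)" using Pinv[of g a "al (ginv G s) b"] a by simp
  finally show ?thesis .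
qed

lemma Pt: "g \<in> mor G \<Longrightarrow> (al g (t * one (ginv G g)) = t * one g) \<longleftrightarrow>
   PP g (t * one (src G g)) (t * one (tgt G g))"
proof -
  assume g: "g \<in> mor G"
  have "one (ginv G g) \<in> Sg (src G g)" using one_in[OF mor_inv[OF g]] sub_src[OF g] by blast
  then have 1: "one (src G g) * one (ginv G g) = one (ginv G g)"
    using EU2[of "src G g" "one (ginv G g)"] g by simp
  have "one g \<in> Sg (tgt G g)" using one_in[OF g] sub_tgt[OF g] by blast
  then have 2: "one (tgt G g) * one g = one g"
    using EU2[of "tgt G g" "one g"] g by simp
  show ?thesis unfolding PP_def using 1 2 by (simp add: mult.assoc)
qed

end

locale pasH = pas G Sg al one for G :: "('g, 'b) groupoid_scheme" and Sg :: "'g \<Rightarrow> 'a::ring set" and al one +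
  fixes H :: "'g set"
  assumes Hw: "H \<in> wSub G Sg"
begin

lemma e_src: "g \<in> mor G \<Longrightarrow> one (src G g) * one (ginv G g) = one (ginv G g)"
proof -
  assume g: "g \<in> mor G"
  have "one (ginv G g) \<in> Sg (src G g)" using one_in[OF mor_inv[OF g]] sub_src[OF g] by blast
  then show ?thesis using EU2[of "src G g" "one (ginv G g)"] g by simp
qed
lemma e_tgt: "g \<in> mor G \<Longrightarrow> one (tgt G g) * one g = one g"
proof -
  assume g: "g \<in> mor G"
  have "one g \<in> Sg (tgt G g)" using one_in[OF g] sub_tgt[OF g] by blast
  then show ?thesis using EU2[of "tgt G g" "one g"] g by simp
qed

lemma H_sub: "subgroupoid G H" using Hw unfolding wSub_def by blast
lemma H_wide: "objs G \<subseteq> H" using Hw unfolding wSub_def wide_def by blast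
lemma H_gt: "group_type G H Sg" using Hw unfolding wSub_def by blast
lemma H_mor: "h \<in> H \<Longrightarrow> h \<in> mor G" using H_sub unfolding subgroupoid_def by blast
lemma H_inv: "h \<in> H \<Longrightarrow> ginv G h \<in> H" using H_sub unfolding subgroupoid_def by blast
lemma H_comp: "h \<in> H \<Longrightarrow> k \<in> H \<Longrightarrow> src G h = tgt G k \<Longrightarrow> comp G h k \<in> H"
  using H_sub unfolding subgroupoid_def by blast

lemma srcH: "src G ` H = objs G"
proof
  show "src G ` H \<subseteq> objs G" using H_mor by auto
  show "objs G \<subseteq> src G ` H"
  proof
    fix x assume x: "x \<in> objs G"
    then have "x \<in> H" "src G x = x" using H_wide by auto
    then show "x \<in> src G ` H" by (metis image_eqI)
  qed
qed

definition cmp :: "'g \<Rightarrow> 'g set" where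
  "cmp x = {y \<in> src G ` H. \<exists>h\<in>H. src G h = x \<and> tgt G h = y}"

lemma comps: "components G H = cmp ` objs G"
  unfolding components_def cmp_def srcH by blast

lemma cmp_sub: "cmp x \<subseteq> objs G"
  unfolding cmp_def srcH by blast

lemma cmp_mem: "y \<in> cmp x \<longleftrightarrow> y \<in> objs G \<and> (\<exists>h\<in>H. src G h = x \<and> tgt G h = y)"
  unfolding cmp_def srcH by blast

lemma cmp_self: "y \<in> objs G \<Longrightarrow> y \<in> cmp y"
proof -
  assume y: "y \<in> objs G"
  then have "y \<in> H" "src G y = y" "tgt G y = y" using H_wide by auto
  then show ?thesis unfolding cmp_mem using y by blast
qed

lemma comp_iff: "Y \<in> components G H \<Longrightarrow> y \<in> Y \<Longrightarrow> z \<in> objs G \<Longrightarrow>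
  z \<in> Y \<longleftrightarrow> (\<exists>h\<in>H. src G h = y \<and> tgt G h = z)"
proof -
  assume a: "Y \<in> components G H" "y \<in> Y" "z \<in> objs G"
  then obtain x where x: "x \<in> objs G" "Y = cmp x" using comps by blast
  then obtain h0 where h0: "h0 \<in> H" "src G h0 = x" "tgt G h0 = y" using a cmp_mem by blast
  have m0: "h0 \<in> mor G" using H_mor h0 by blast
  show ?thesis
  proof
    assume "z \<in> Y"
    then obtain h1 where h1: "h1 \<in> H" "src G h1 = x" "tgt G h1 = z" using x cmp_mem by blast
    have m1: "h1 \<in> mor G" using H_mor h1 by blast
    have "comp G h1 (ginv G h0) \<in> H" using H_comp H_inv h0 h1 m0 m1 by simp
    moreover have "src G (comp G h1 (ginv G h0)) = y" "tgt G (comp G h1 (ginv G h0)) = z"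
      using h0 h1 m0 m1 by simp_all
    ultimately show "\<exists>h\<in>H. src G h = y \<and> tgt G h = z" by blast
  next
    assume "\<exists>h\<in>H. src G h = y \<and> tgt G h = z"
    then obtain h where h: "h \<in> H" "src G h = y" "tgt G h = z" by blast
    have m: "h \<in> mor G" using H_mor h by blast
    have "comp G h h0 \<in> H" using H_comp h h0 by simp
    moreover have "src G (comp G h h0) = x" "tgt G (comp G h h0) = z"
      using h0 h m0 m by simp_all
    ultimately show "z \<in> Y" using x a cmp_mem by blast
  qed
qed

lemma comp_objs: "Y \<in> components G H \<Longrightarrow> Y \<subseteq> objs G"
  using comps cmp_sub by blast

lemma comp_closed: "Y \<in> components G H \<Longrightarrow> h \<in> H \<Longrightarrow> src G h \<in> Y \<longleftrightarrow> tgt G h \<in> Y"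
proof -
  assume a: "Y \<in> components G H" "h \<in> H"
  have m: "h \<in> mor G" using H_mor a by blast
  show ?thesis
  proof
    assume "src G h \<in> Y" then show "tgt G h \<in> Y" using comp_iff[of Y "src G h" "tgt G h"] a m by auto
  next
    assume t: "tgt G h \<in> Y"
    have "ginv G h \<in> H" using H_inv a by blast
    moreover have "src G (ginv G h) = tgt G h" "tgt G (ginv G h) = src G h" using m by simp_all
    ultimately have "\<exists>k\<in>H. src G k = tgt G h \<and> tgt G k = src G h" by blast
    then show "src G h \<in> Y" using comp_iff[of Y "tgt G h" "src G h"] a m t by simp
  qed
qed

lemma sigma_ex: "Y \<in> components G H \<Longrightarrow> r \<in> Y \<Longrightarrow> y \<in> Y \<Longrightarrow>
  \<exists>s\<in>H. src G s = r \<and> tgt G s = y \<and> fullm s"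
proof -
  assume a: "Y \<in> components G H" "r \<in> Y" "y \<in> Y"
  have "group_type_on G H Sg Y" using H_gt a unfolding group_type_def by blast
  then obtain x \<tau> where t: "x \<in> Y" "\<forall>y\<in>Y. \<tau> y \<in> H \<and> src G (\<tau> y) = x \<and> tgt G (\<tau> y) = y \<and>
        Sg (ginv G (\<tau> y)) = Sg x \<and> Sg (\<tau> y) = Sg y"
    unfolding group_type_on_def by blast
  have Yo: "Y \<subseteq> objs G" using comp_objs a by blast
  have full: "fullm (\<tau> z)" if "z \<in> Y" for z using t that unfolding fullm_def by simp
  have mr: "\<tau> r \<in> mor G" and my: "\<tau> y \<in> mor G" using t a H_mor by auto
  let ?s = "comp G (\<tau> y) (ginv G (\<tau> r))"
  have sH: "?s \<in> H" using H_comp H_inv t a mr my by simp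
  have ss: "src G ?s = r" "tgt G ?s = y" using t a mr my by simp_all
  have f1: "Sg ?s = Sg y"
    using RDc[of "ginv G (\<tau> r)" "\<tau> y"] full_inv[OF mr full[OF a(2)]] mr my t a by simp
  have "ginv G ?s = comp G (\<tau> r) (ginv G (\<tau> y))" using inv_comp mr my t a by simp
  moreover have "Sg (comp G (\<tau> r) (ginv G (\<tau> y))) = Sg r"
    using RDc[of "ginv G (\<tau> y)" "\<tau> r"] full_inv[OF my full[OF a(3)]] mr my t a by simp
  ultimately have f2: "Sg (ginv G ?s) = Sg r" by simp
  have "fullm ?s" unfolding fullm_def using f1 f2 ss by simp
  then show ?thesis using sH ss by blast
qed

definition TT :: "'a set" where "TT = fixed_ring G al one H UNIV"
definition GT :: "'g set" where "GT = stab G al one (mor G) TT"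

lemma TT_mem: "t \<in> TT \<longleftrightarrow> (\<forall>h\<in>H. al h (t * one (ginv G h)) = t * one h)"
  unfolding TT_def fixed_ring_def by blast

lemma T1: "t \<in> TT \<Longrightarrow> h \<in> H \<Longrightarrow> PP h (t * one (src G h)) (t * one (tgt G h))"
  using TT_mem Pt H_mor by blast

lemma T2: "t \<in> TT \<Longrightarrow> s \<in> H \<Longrightarrow> fullm s \<Longrightarrow> al s (t * one (src G s)) = t * one (tgt G s)"
proof -
  assume a: "t \<in> TT" "s \<in> H" "fullm s"
  have m: "s \<in> mor G" using H_mor a by blast
  have "one (ginv G s) = one (src G s)" using one_eq[of "ginv G s" "src G s"] m a(3) unfolding fullm_def by simp
  moreover have "one s = one (tgt G s)" using one_eq[of s "tgt G s"] m a(3) unfolding fullm_def by simp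
  ultimately show ?thesis using a TT_mem by metis
qed

lemma GT_iff: "g \<in> GT \<longleftrightarrow> g \<in> mor G \<and> (\<forall>t\<in>TT. PP g (t * one (src G g)) (t * one (tgt G g)))"
  unfolding GT_def stab_def using Pt by blast

lemma GT_obj: "x \<in> objs G \<Longrightarrow> x \<in> GT"
proof -
  assume x: "x \<in> objs G"
  have m: "x \<in> mor G" using obj_mor x by blast
  have "PP x (t * one x) (t * one x)" for t
  proof -
    have "t * one x * one x \<in> Sg x" using m by simp
    then show ?thesis unfolding PP_def using obj_id x by simp
  qed
  then show ?thesis using GT_iff m x by simp
qed

lemma GT_mor: "g \<in> GT \<Longrightarrow> g \<in> mor G" using GT_iff by blast

lemma GT_inv: "g \<in> GT \<Longrightarrow> ginv G g \<in> GT"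
proof -
  assume g: "g \<in> GT"
  have m: "g \<in> mor G" using GT_mor g by blast
  have "PP (ginv G g) (t * one (tgt G g)) (t * one (src G g))" if "t \<in> TT" for t
    using Pinv[of g "t * one (src G g)" "t * one (tgt G g)"] m g that GT_iff by blast
  then show ?thesis using GT_iff m by simp
qed

lemma H_GT: "H \<subseteq> GT"
  using GT_iff T1 H_mor by blast

lemma GT_right: "g \<in> GT \<Longrightarrow> s \<in> H \<Longrightarrow> fullm s \<Longrightarrow> src G g = tgt G s \<Longrightarrow> comp G g s \<in> GT"
proof -
  assume a: "g \<in> GT" "s \<in> H" "fullm s" "src G g = tgt G s"
  have mg: "g \<in> mor G" using GT_mor a by blast
  have ms: "s \<in> mor G" using H_mor a by blast
  have "PP (comp G g s) (t * one (src G s)) (t * one (tgt G g))" if t: "t \<in> TT" for t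
  proof -
    have "PP g (t * one (src G g)) (t * one (tgt G g))" using a t GT_iff by blast
    then have "PP g (al s (t * one (src G s))) (t * one (tgt G g))" using T2 t a by simp
    then show ?thesis using Pr[of s g "t * one (src G s)"] a mg ms by simp
  qed
  then show ?thesis using GT_iff mg ms a by simp
qed

lemma GT_left: "g \<in> GT \<Longrightarrow> s \<in> H \<Longrightarrow> fullm s \<Longrightarrow> tgt G g = src G s \<Longrightarrow> comp G s g \<in> GT"
proof -
  assume a: "g \<in> GT" "s \<in> H" "fullm s" "tgt G g = src G s"
  have mg: "g \<in> mor G" using GT_mor a by blast
  have ms: "s \<in> mor G" using H_mor a by blast
  have si: "ginv G s \<in> H" "fullm (ginv G s)" using H_inv full_inv a ms by auto
  have "PP (comp G s g) (t * one (src G g)) (t * one (tgt G s))" if t: "t \<in> TT" for t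
  proof -
    have "PP g (t * one (src G g)) (t * one (tgt G g))" using a t GT_iff by blast
    moreover have "al (ginv G s) (t * one (tgt G s)) = t * one (src G s)"
      using T2[of t "ginv G s"] t si ms by simp
    ultimately have "PP g (t * one (src G g)) (al (ginv G s) (t * one (tgt G s)))" using a by simp
    then show ?thesis using Pl[of s g "t * one (tgt G s)" "t * one (src G g)"] a mg ms by simp
  qed
  then show ?thesis using GT_iff mg ms a by simp
qed

lemma indicator_T: "Y \<in> components G H \<Longrightarrow> (\<Sum>y\<in>Y. one y) \<in> TT"
proof -
  assume Y: "Y \<in> components G H"
  have Yo: "Y \<subseteq> objs G" using comp_objs Y by blast
  have ind: "(\<Sum>y\<in>Y. one y) * one w = (if w \<in> Y then one w else 0)" if "w \<in> objs G" for w
    using SUMC[of Y w one] Yo that obj_mor one_in by blast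
  have "PP h ((\<Sum>y\<in>Y. one y) * one (src G h)) ((\<Sum>y\<in>Y. one y) * one (tgt G h))" if h: "h \<in> H" for h
  proof -
    have m: "h \<in> mor G" using H_mor h by blast
    have "one (src G h) * one (ginv G h) = one (ginv G h)" using e_src m by blast
    moreover have "one (tgt G h) * one h = one h" using e_tgt m by blast
    ultimately show ?thesis
      using ind[of "src G h"] ind[of "tgt G h"] comp_closed[OF Y h] m al_unit[OF m] al_zero[OF m]
      unfolding PP_def by auto
  qed
  then show ?thesis using TT_mem Pt H_mor by blast
qed

lemma GT_same: "g \<in> GT \<Longrightarrow> Y \<in> components G H \<Longrightarrow> src G g \<in> Y \<longleftrightarrow> tgt G g \<in> Y"
proof -
  assume g: "g \<in> GT" and Y: "Y \<in> components G H"
  have m: "g \<in> mor G" using GT_mor g by blast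
  have Yo: "Y \<subseteq> objs G" using comp_objs Y by blast
  let ?t = "\<Sum>y\<in>Y. one y"
  have ind: "?t * one w = (if w \<in> Y then one w else 0)" if "w \<in> objs G" for w
    using SUMC[of Y w one] Yo that obj_mor one_in by blast
  have P: "PP g (?t * one (src G g)) (?t * one (tgt G g))" using GT_iff g indicator_T Y by blast
  have e1: "one (src G g) * one (ginv G g) = one (ginv G g)" using e_src m by blast
  have e2: "one (tgt G g) * one g = one g" using e_tgt m by blast
  have nz': "one g \<noteq> 0" using nz m by blast
  show ?thesis
  proof (rule ccontr)
    assume "\<not> (src G g \<in> Y \<longleftrightarrow> tgt G g \<in> Y)"
    then consider "src G g \<in> Y" "tgt G g \<notin> Y" | "src G g \<notin> Y" "tgt G g \<in> Y" by blast
    then show False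
    proof cases
      case 1
      then have "al g (one (ginv G g)) = 0" using P ind[of "src G g"] ind[of "tgt G g"] m e1
        unfolding PP_def by simp
      then show False using al_unit[OF m] nz' by simp
    next
      case 2
      then have "al g 0 = one g" using P ind[of "src G g"] ind[of "tgt G g"] m e2
        unfolding PP_def by simp
      then show False using al_zero[OF m] nz' by simp
    qed
  qed
qed

end

context pasH
begin

definition Tr :: "'g \<Rightarrow> 'a set" where
  "Tr r = fixed_ring G al one (loc_group G H r) (Sg r)"

lemma Tr_mem: "b \<in> Tr r \<longleftrightarrow> b \<in> Sg r \<and> (\<forall>k\<in>H. src G k = r \<and> tgt G k = r \<longrightarrow> PP k b b)"
  unfolding Tr_def fixed_ring_def loc_group_def PP_def by blast

lemma extension: "Y \<in> components G H \<Longrightarrow> r \<in> Y \<Longrightarrow> b \<in> Tr r \<Longrightarrow> \<exists>t\<in>TT. t * one r = b"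
proof -
  assume Y: "Y \<in> components G H" and r: "r \<in> Y" and b: "b \<in> Tr r"
  have Yo: "Y \<subseteq> objs G" using comp_objs Y by blast
  have "\<forall>y\<in>Y. \<exists>s. s \<in> H \<and> src G s = r \<and> tgt G s = y \<and> fullm s"
    using sigma_ex[OF Y r] by blast
  then obtain \<sigma> where sg: "\<forall>y\<in>Y. \<sigma> y \<in> H \<and> src G (\<sigma> y) = r \<and> tgt G (\<sigma> y) = y \<and> fullm (\<sigma> y)"
    by metis
  have bS: "b \<in> Sg r" and fixb: "\<And>k. k \<in> H \<Longrightarrow> src G k = r \<Longrightarrow> tgt G k = r \<Longrightarrow> PP k b b"
    using b Tr_mem by auto
  have sm: "\<sigma> y \<in> mor G" if "y \<in> Y" for y using sg that H_mor by blast
  have inS: "al (\<sigma> y) b \<in> Sg y" if y: "y \<in> Y" for y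
    using full_al_in[of "\<sigma> y" b] sm[OF y] sg y bS by simp
  let ?t = "\<Sum>y\<in>Y. al (\<sigma> y) b"
  have tw: "?t * one w = (if w \<in> Y then al (\<sigma> w) b else 0)" if "w \<in> objs G" for w
    using SUMC[of Y w "\<lambda>y. al (\<sigma> y) b"] Yo that inS by blast
  have ro: "r \<in> objs G" using Yo r by blast
  have rm: "r \<in> mor G" using obj_mor ro by blast
  have "PP (\<sigma> r) b b" using fixb sg r by blast
  moreover have "one (ginv G (\<sigma> r)) = one r"
    using one_eq[of "ginv G (\<sigma> r)" r] sm[OF r] sg r rm unfolding fullm_def by auto
  moreover have "one (\<sigma> r) = one r"
    using one_eq[of "\<sigma> r" r] sm[OF r] sg r rm unfolding fullm_def by auto
  moreover have "b * one r = b" using EU1 rm bS by blast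
  ultimately have sr: "al (\<sigma> r) b = b" unfolding PP_def by simp
  have tr: "?t * one r = b" using tw[OF ro] r sr by simp
  have "PP h (?t * one (src G h)) (?t * one (tgt G h))" if h: "h \<in> H" for h
  proof -
    have m: "h \<in> mor G" using H_mor h by blast
    show ?thesis
    proof (cases "src G h \<in> Y")
      case False
      then have "tgt G h \<notin> Y" using comp_closed[OF Y h] by simp
      then show ?thesis using False tw[of "src G h"] tw[of "tgt G h"] m al_zero[OF m]
        unfolding PP_def by simp
    next
      case True
      let ?y = "src G h" and ?z = "tgt G h"
      have z: "?z \<in> Y" using comp_closed[OF Y h] True by simp
      have my: "\<sigma> ?y \<in> mor G" and mz: "\<sigma> ?z \<in> mor G" using sm True z by auto
      have sy: "src G (\<sigma> ?y) = r" "tgt G (\<sigma> ?y) = ?y" "fullm (\<sigma> ?y)" "\<sigma> ?y \<in> H"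
        using sg True by auto
      have sz: "src G (\<sigma> ?z) = r" "tgt G (\<sigma> ?z) = ?z" "fullm (\<sigma> ?z)" "\<sigma> ?z \<in> H"
        using sg z by auto
      let ?g = "comp G h (\<sigma> ?y)"
      have gm: "?g \<in> mor G" "src G ?g = r" "tgt G ?g = ?z" using m my sy by auto
      let ?k = "comp G (ginv G (\<sigma> ?z)) ?g"
      have kH: "?k \<in> H" using H_comp H_inv h sy sz m my mz by simp
      have ks: "src G ?k = r" "tgt G ?k = r" using gm mz sz by auto
      have "PP ?k b b" using fixb kH ks by blast
      then have "PP ?g b (al (\<sigma> ?z) b)"
        using Pl[of "ginv G (\<sigma> ?z)" ?g b b] mz sz full_inv gm bS by simp
      then have "PP h (al (\<sigma> ?y) b) (al (\<sigma> ?z) b)"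
        using Pr[of "\<sigma> ?y" h b "al (\<sigma> ?z) b"] my sy m bS by simp
      then show ?thesis using tw[of ?y] tw[of ?z] True z m by simp
    qed
  qed
  then have "?t \<in> TT" using TT_mem Pt H_mor by blast
  then show ?thesis using tr by blast
qed

lemma K1: "Y \<in> components G H \<Longrightarrow> r \<in> Y \<Longrightarrow>
  stab G al one (loc_group G (mor G) r) (Tr r) = loc_group G GT r"
proof -
  assume Y: "Y \<in> components G H" and r: "r \<in> Y"
  have ro: "r \<in> objs G" using comp_objs Y r by blast
  have rm: "r \<in> mor G" using obj_mor ro by blast
  show ?thesis
  proof
    show "stab G al one (loc_group G (mor G) r) (Tr r) \<subseteq> loc_group G GT r"
    proof
      fix l assume l: "l \<in> stab G al one (loc_group G (mor G) r) (Tr r)"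
      then have lm: "l \<in> mor G" "src G l = r" "tgt G l = r" and lb: "\<forall>b\<in>Tr r. PP l b b"
        unfolding stab_def loc_group_def PP_def by auto
      have "t * one r \<in> Tr r" if t: "t \<in> TT" for t
      proof -
        have "\<forall>k\<in>H. src G k = r \<and> tgt G k = r \<longrightarrow> PP k (t * one r) (t * one r)"
        proof (intro ballI impI)
          fix k assume "k \<in> H" "src G k = r \<and> tgt G k = r"
          then show "PP k (t * one r) (t * one r)" using T1[OF t, of k] by metis
        qed
        then show ?thesis unfolding Tr_mem using rm by simp
      qed
      then have "l \<in> GT" using GT_iff lm lb by auto
      then show "l \<in> loc_group G GT r" unfolding loc_group_def using lm by simp
    qed
  next
    show "loc_group G GT r \<subseteq> stab G al one (loc_group G (mor G) r) (Tr r)"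
    proof
      fix l assume l: "l \<in> loc_group G GT r"
      then have lg: "l \<in> GT" "src G l = r" "tgt G l = r" unfolding loc_group_def by auto
      have lm: "l \<in> mor G" using GT_mor lg by blast
      have "PP l b b" if b: "b \<in> Tr r" for b
      proof -
        obtain t where t: "t \<in> TT" "t * one r = b" using extension[OF Y r b] by blast
        then show ?thesis using GT_iff lg by auto
      qed
      then show "l \<in> stab G al one (loc_group G (mor G) r) (Tr r)"
        unfolding stab_def loc_group_def PP_def using lm lg by auto
    qed
  qed
qed

end

context pasH
begin

lemma main_i: "(\<forall>Y\<in>components G H. rep Y \<in> Y) \<Longrightarrow>
  (subgroupoid G GT \<and> wide G GT) \<longleftrightarrow>
  (\<forall>Y\<in>components G H. subgroup_at G (rep Y) (stab G al one (loc_group G (mor G) (rep Y)) (Tr (rep Y))))"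
proof -
  assume rep: "\<forall>Y\<in>components G H. rep Y \<in> Y"
  show ?thesis
  proof
    assume sw: "subgroupoid G GT \<and> wide G GT"
    show "\<forall>Y\<in>components G H. subgroup_at G (rep Y) (stab G al one (loc_group G (mor G) (rep Y)) (Tr (rep Y)))"
    proof
      fix Y assume Y: "Y \<in> components G H"
      let ?r = "rep Y"
      have r: "?r \<in> Y" using rep Y by blast
      have ro: "?r \<in> objs G" using comp_objs Y r by blast
      have "subgroup_at G ?r (loc_group G GT ?r)"
        unfolding subgroup_at_def
      proof (intro conjI ballI)
        show "loc_group G GT ?r \<subseteq> loc_group G (mor G) ?r" unfolding loc_group_def using GT_mor by auto
        show "?r \<in> loc_group G GT ?r" unfolding loc_group_def using GT_obj ro by simp
        fix h assume h: "h \<in> loc_group G GT ?r"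
        then show "ginv G h \<in> loc_group G GT ?r" unfolding loc_group_def using GT_inv GT_mor by auto
        fix k assume k: "k \<in> loc_group G GT ?r"
        have "comp G h k \<in> GT" using sw h k unfolding subgroupoid_def loc_group_def by auto
        then show "comp G h k \<in> loc_group G GT ?r" using h k GT_mor unfolding loc_group_def by auto
      qed
      then show "subgroup_at G ?r (stab G al one (loc_group G (mor G) ?r) (Tr ?r))" using K1[OF Y r] by simp
    qed
  next
    assume hyp: "\<forall>Y\<in>components G H. subgroup_at G (rep Y) (stab G al one (loc_group G (mor G) (rep Y)) (Tr (rep Y)))"
    have wd: "wide G GT" unfolding wide_def using GT_obj by blast
    have cc: "comp G f g \<in> GT" if f: "f \<in> GT" and g: "g \<in> GT" and fg: "src G f = tgt G g" for f g
    proof -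
      have mf: "f \<in> mor G" and mg: "g \<in> mor G" using f g GT_mor by auto
      let ?y = "src G g" and ?z = "tgt G g" and ?w = "tgt G f"
      let ?Y = "cmp ?y"
      have Y: "?Y \<in> components G H" using comps mg by simp
      have y: "?y \<in> ?Y" using cmp_self mg by simp
      have z: "?z \<in> ?Y" using GT_same[OF g Y] y by simp
      have w: "?w \<in> ?Y" using GT_same[OF f Y] z fg by simp
      let ?r = "rep ?Y"
      have r: "?r \<in> ?Y" using rep Y by blast
      obtain sy where sy: "sy \<in> H" "src G sy = ?r" "tgt G sy = ?y" "fullm sy" using sigma_ex[OF Y r y] by blast
      obtain sz where sz: "sz \<in> H" "src G sz = ?r" "tgt G sz = ?z" "fullm sz" using sigma_ex[OF Y r z] by blast
      obtain sw where sw: "sw \<in> H" "src G sw = ?r" "tgt G sw = ?w" "fullm sw" using sigma_ex[OF Y r w] by blast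
      have my: "sy \<in> mor G" and mz: "sz \<in> mor G" and mw: "sw \<in> mor G" using sy sz sw H_mor by auto
      let ?g' = "comp G (ginv G sz) (comp G g sy)"
      let ?f' = "comp G (ginv G sw) (comp G f sz)"
      have g1: "comp G g sy \<in> GT" using GT_right g sy by simp
      have g': "?g' \<in> GT" using GT_left[OF g1, of "ginv G sz"] H_inv sz sy full_inv mz mg my by simp
      have f1: "comp G f sz \<in> GT" using GT_right f sz fg by simp
      have f': "?f' \<in> GT" using GT_left[OF f1, of "ginv G sw"] H_inv sw sz full_inv mw mf mz fg by simp
      have g'l: "?g' \<in> loc_group G GT ?r" unfolding loc_group_def using g' mg my mz sy sz by simp
      have f'l: "?f' \<in> loc_group G GT ?r" unfolding loc_group_def using f' mf mw mz sw sz fg by simp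
      have "subgroup_at G ?r (loc_group G GT ?r)" using hyp Y K1[OF Y r] by metis
      then have c: "comp G ?f' ?g' \<in> loc_group G GT ?r" using g'l f'l unfolding subgroup_at_def by blast
      define c0 where "c0 = comp G ?f' ?g'"
      have c0: "c0 \<in> GT" "src G c0 = ?r" "tgt G c0 = ?r" using c unfolding loc_group_def c0_def by auto
      have c0m: "c0 \<in> mor G" using GT_mor c0 by blast
      have c1: "comp G c0 (ginv G sy) \<in> GT"
        using GT_right[of c0 "ginv G sy"] c0 H_inv sy full_inv my by simp
      have c1t: "tgt G (comp G c0 (ginv G sy)) = ?r" using c0 c0m my sy by simp
      let ?X = "comp G sw (comp G c0 (ginv G sy))"
      have c2: "?X \<in> GT"
        using GT_left[OF c1, of sw] sw c1t by simp
      have "?X = comp G f g" unfolding c0_def using mf mg my mz mw sy sz sw fg comp_src_r[of g] by simp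
      then show ?thesis using c2 by simp
    qed
    have "subgroupoid G GT" unfolding subgroupoid_def
      using GT_mor GT_obj GT_inv cc by auto
    then show "subgroupoid G GT \<and> wide G GT" using wd by simp
  qed
qed


lemma main_ii: "(\<forall>Y\<in>components G H. rep Y \<in> Y) \<Longrightarrow>
  GT = H \<longleftrightarrow>
  (\<forall>Y\<in>components G H. stab G al one (loc_group G (mor G) (rep Y)) (Tr (rep Y)) = loc_group G H (rep Y))"
proof -
  assume rep: "\<forall>Y\<in>components G H. rep Y \<in> Y"
  show ?thesis
  proof
    assume "GT = H"
    then show "\<forall>Y\<in>components G H. stab G al one (loc_group G (mor G) (rep Y)) (Tr (rep Y)) = loc_group G H (rep Y)"
      using K1 rep by simp
  next
    assume hyp: "\<forall>Y\<in>components G H. stab G al one (loc_group G (mor G) (rep Y)) (Tr (rep Y)) = loc_group G H (rep Y)"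
    have "GT \<subseteq> H"
    proof
      fix g assume g: "g \<in> GT"
      have mg: "g \<in> mor G" using g GT_mor by auto
      let ?y = "src G g" and ?z = "tgt G g"
      let ?Y = "cmp ?y"
      have Y: "?Y \<in> components G H" using comps mg by simp
      have y: "?y \<in> ?Y" using cmp_self mg by simp
      have z: "?z \<in> ?Y" using GT_same[OF g Y] y by simp
      let ?r = "rep ?Y"
      have r: "?r \<in> ?Y" using rep Y by blast
      obtain sy where sy: "sy \<in> H" "src G sy = ?r" "tgt G sy = ?y" "fullm sy" using sigma_ex[OF Y r y] by blast
      obtain sz where sz: "sz \<in> H" "src G sz = ?r" "tgt G sz = ?z" "fullm sz" using sigma_ex[OF Y r z] by blast
      have my: "sy \<in> mor G" and mz: "sz \<in> mor G" using sy sz H_mor by auto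
      define g' where "g' = comp G (ginv G sz) (comp G g sy)"
      have g1: "comp G g sy \<in> GT" using GT_right g sy by simp
      have g'G: "g' \<in> GT" unfolding g'_def using GT_left[OF g1, of "ginv G sz"] H_inv sz sy full_inv mz mg my by simp
      have g'l: "g' \<in> loc_group G GT ?r" unfolding loc_group_def g'_def using g'G[unfolded g'_def] mg my mz sy sz by simp
      then have g'H: "g' \<in> H" using hyp Y K1[OF Y r] unfolding loc_group_def by auto
      have g's: "src G g' = ?r" "tgt G g' = ?r" using g'l unfolding loc_group_def by auto
      have gm': "g' \<in> mor G" using H_mor g'H by blast
      have "comp G sz (comp G g' (ginv G sy)) \<in> H"
        using H_comp[of g' "ginv G sy"] H_comp[of sz] H_inv sy sz g'H g's gm' my by simp
      moreover have "comp G sz (comp G g' (ginv G sy)) = g"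
        unfolding g'_def using mg my mz sy sz comp_src_r[of g] by simp
      ultimately show "g \<in> H" by simp
    qed
    then show "GT = H" using H_GT by blast
  qed
qed

end

theorem proposition4p3:
  fixes G :: "'g groupoid"
    and Sg :: "'g \<Rightarrow> 'a::ring set"
    and al :: "'g \<Rightarrow> 'a \<Rightarrow> 'a"
    and one :: "'g \<Rightarrow> 'a"
    and H :: "'g set"
    and rep :: "'g set \<Rightarrow> 'g"
  assumes "is_groupoid G" and "finite (mor G)" and "connected_groupoid G"
    and "partial_action G Sg al" and "unital_pa G Sg one"
    and "group_type G (mor G) Sg"
    and "internal_direct_sum (objs G) Sg"
    and "\<forall>g\<in>mor G. one g \<noteq> 0"
    and "H \<in> wSub G Sg"
    and "\<forall>Y\<in>components G H. rep Y \<in> Y"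
  defines "T \<equiv> fixed_ring G al one H UNIV"
  shows "(subgroupoid G (stab G al one (mor G) T) \<and> wide G (stab G al one (mor G) T)
           \<longleftrightarrow> (\<forall>Y\<in>components G H.
                 subgroup_at G (rep Y)
                   (stab G al one (loc_group G (mor G) (rep Y))
                      (fixed_ring G al one (loc_group G H (rep Y)) (Sg (rep Y))))))
       \<and> (stab G al one (mor G) T = H
           \<longleftrightarrow> (\<forall>Y\<in>components G H.
                 stab G al one (loc_group G (mor G) (rep Y))
                   (fixed_ring G al one (loc_group G H (rep Y)) (Sg (rep Y)))
                 = loc_group G H (rep Y)))"
proof -
  interpret pasH G Sg al one H
    by unfold_locales (use assms in auto)
  have e: "stab G al one (mor G) T = GT" unfolding T_def GT_def TT_def by simp
  show ?thesis
    using main_i[OF assms(10)] main_ii[OF assms(10)] unfolding e Tr_def by simp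
qed

end
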